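(* If $(G,\tau)$ is a metrizable totally bounded Hausdorff topological group, then $(G,\mathcal{S}_\tau)$ is $mu$-bounded.
   Context: $\mathcal{S}_\tau$ is the smallest group ideal on $G$ containing every set $\{x\}\cup\{x_n:n\in\omega\}$ with $x_n\to x$ in $(G,\tau)$. A group ideal on $G$ is a family of subsets containing all finite subsets, closed under subsets and under $(A,B)\mapsto AB^{-1}$; it defines the coarse structure on $G$ with base $\{\{(x,y):x\in Ay\}:A\in\mathcal{I}\}$. For an entourage $E$, $E[x]=\{y:(x,y)\in E\}$. A function $f:(X,\mathcal{E})\to\mathbb{R}$ is macro-uniform if for every $E\in\mathcal{E}$, $\sup_{x\in X}\operatorname{diam} f(E[x])<\infty$. A coarse space is $mu$-bounded if every macro-uniform function on it is bounded. *)

theory Defs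
  imports "HOL-Analysis.Analysis"
begin

text \<open>A group written additively (type class group_add, not necessarily commutative);
  the group product x y^-1 becomes x - y = x + (- y).  The topology tau is an explicit
  topology X on the whole type.\<close>

definition topological_group :: "'a::group_add topology \<Rightarrow> bool" where
  "topological_group X \<longleftrightarrow> topspace X = UNIV
     \<and> continuous_map (prod_topology X X) X (\<lambda>(x, y). x + y)
     \<and> continuous_map X X uminus"

definition group_totally_bounded :: "'a::group_add topology \<Rightarrow> bool" where
  "group_totally_bounded X \<longleftrightarrow>
     (\<forall>U. openin X U \<and> 0 \<in> U \<longrightarrow> (\<exists>F. finite F \<and> (\<Union>x\<in>F. (\<lambda>u. x + u) ` U) = UNIV))"

definition set_mult_inv :: "'a::group_add set \<Rightarrow> 'a set \<Rightarrow> 'a set" where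
  "set_mult_inv A B = {a - b | a b. a \<in> A \<and> b \<in> B}"

definition group_ideal :: "'a::group_add set set \<Rightarrow> bool" where
  "group_ideal I \<longleftrightarrow>
     (\<forall>F. finite F \<longrightarrow> F \<in> I)
     \<and> (\<forall>A B. A \<in> I \<and> B \<subseteq> A \<longrightarrow> B \<in> I)
     \<and> (\<forall>A B. A \<in> I \<and> B \<in> I \<longrightarrow> set_mult_inv A B \<in> I)"

definition S_tau :: "'a::group_add topology \<Rightarrow> 'a set set" where
  "S_tau X = \<Inter>{I. group_ideal I \<and>
      (\<forall>x (xs :: nat \<Rightarrow> 'a). limitin X xs x sequentially \<longrightarrow> insert x (range xs) \<in> I)}"

definition ideal_coarse_structure :: "'a::group_add set set \<Rightarrow> ('a \<times> 'a) set set" where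
  "ideal_coarse_structure I = {E. \<exists>A\<in>I. E \<subseteq> {(x, y). \<exists>a\<in>A. x = a + y}}"

definition ball_ent :: "('a \<times> 'a) set \<Rightarrow> 'a \<Rightarrow> 'a set" where
  "ball_ent E x = {y. (x, y) \<in> E}"

definition macro_uniform :: "('a \<times> 'a) set set \<Rightarrow> ('a \<Rightarrow> real) \<Rightarrow> bool" where
  "macro_uniform \<E> f \<longleftrightarrow>
     (\<forall>E\<in>\<E>. \<exists>C. \<forall>x. \<forall>y\<in>ball_ent E x. \<forall>z\<in>ball_ent E x. \<bar>f y - f z\<bar> \<le> C)"

definition mu_bounded :: "('a \<times> 'a) set set \<Rightarrow> bool" where
  "mu_bounded \<E> \<longleftrightarrow> (\<forall>f :: 'a \<Rightarrow> real. macro_uniform \<E> f \<longrightarrow> bounded (range f))"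

end

theory Submission
  imports Defs
begin

lemma local_bound:
  fixes X :: "'a::group_add topology" and f :: "'a \<Rightarrow> real"
  assumes tg: "topological_group X"
    and mz: "metrizable_space X"
    and mu: "macro_uniform (ideal_coarse_structure (S_tau X)) f"
  shows "\<exists>U n. openin X U \<and> 0 \<in> U \<and> (\<forall>u\<in>U. \<forall>y. \<bar>f (u + y) - f y\<bar> \<le> real n)"
proof (rule ccontr)
  assume contra: "\<not> ?thesis"
  have top: "topspace X = UNIV" using tg unfolding topological_group_def by blast
  have "first_countable X" using mz metrizable_imp_first_countable by blast
  then obtain B where cB: "countable B" and oB: "\<forall>V\<in>B. openin X V"
    and nB: "\<forall>U. openin X U \<and> 0 \<in> U \<longrightarrow> (\<exists>V\<in>B. 0 \<in> V \<and> V \<subseteq> U)"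
  proof -
    have "0 \<in> topspace X" using top by simp
    with \<open>first_countable X\<close> have "\<exists>B. countable B \<and> (\<forall>V\<in>B. openin X V) \<and>
      (\<forall>U. openin X U \<and> 0 \<in> U \<longrightarrow> (\<exists>V\<in>B. 0 \<in> V \<and> V \<subseteq> U))"
      unfolding first_countable_def by simp
    then show ?thesis using that by blast
  qed
  define B' where "B' = {V\<in>B. 0 \<in> V}"
  have cB': "countable B'" using cB unfolding B'_def by simp
  have "B' \<noteq> {}" using nB[rule_format, of UNIV] top openin_topspace[of X] unfolding B'_def by auto
  define b where "b = from_nat_into B'"
  have rb: "range b = B'" unfolding b_def using cB' \<open>B' \<noteq> {}\<close> by (simp add: range_from_nat_into)
  have bo: "openin X (b j) \<and> 0 \<in> b j" for j
    using rb oB unfolding B'_def by blast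
  define W where "W k = \<Inter> (b ` {..k})" for k
  have Wo: "openin X (W k) \<and> 0 \<in> W k" for k
    unfolding W_def using bo by (auto intro!: openin_Inter)
  have "\<forall>k. \<exists>u y. u \<in> W k \<and> \<bar>f (u + y) - f y\<bar> > real k"
  proof
    fix k
    show "\<exists>u y. u \<in> W k \<and> \<bar>f (u + y) - f y\<bar> > real k"
    proof (rule ccontr)
      assume "\<nexists>u y. u \<in> W k \<and> \<bar>f (u + y) - f y\<bar> > real k"
      then have "\<forall>u\<in>W k. \<forall>y. \<bar>f (u + y) - f y\<bar> \<le> real k" by (simp add: not_less)
      then show False using contra Wo[of k] by blast
    qed
  qed
  then obtain u y where uy: "\<And>k. u k \<in> W k \<and> \<bar>f (u k + y k) - f (y k)\<bar> > real k"
    by metis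
  have lim: "limitin X u 0 sequentially"
    unfolding limitin_def
  proof (intro conjI allI impI)
    show "0 \<in> topspace X" using top by simp
    fix U assume U: "openin X U \<and> 0 \<in> U"
    then obtain V where "V \<in> B" "0 \<in> V" "V \<subseteq> U" using nB by blast
    then have "V \<in> B'" unfolding B'_def by blast
    then obtain j where j: "b j = V" using rb by blast
    show "\<forall>\<^sub>F k in sequentially. u k \<in> U"
    proof (rule eventually_sequentiallyI[of j])
      fix k assume "j \<le> k"
      then have "W k \<subseteq> b j" unfolding W_def by auto
      then show "u k \<in> U" using uy[of k] j \<open>V \<subseteq> U\<close> by blast
    qed
  qed
  define A where "A = insert 0 (range u)"
  have AS: "A \<in> S_tau X" unfolding S_tau_def
  proof (rule InterI)
    fix I assume "I \<in> {I. group_ideal I \<and>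
      (\<forall>x (xs :: nat \<Rightarrow> 'a). limitin X xs x sequentially \<longrightarrow> insert x (range xs) \<in> I)}"
    then show "A \<in> I" unfolding A_def using lim by blast
  qed
  define E where "E = {(x, y). \<exists>a\<in>A. x = a + y}"
  have "E \<in> ideal_coarse_structure (S_tau X)"
    unfolding ideal_coarse_structure_def E_def using AS by blast
  then obtain C where C: "\<And>x y z. y \<in> ball_ent E x \<Longrightarrow> z \<in> ball_ent E x \<Longrightarrow> \<bar>f y - f z\<bar> \<le> C"
    using mu unfolding macro_uniform_def by blast
  obtain k :: nat where k: "real k > C"
    using reals_Archimedean2 by blast
  define x where "x = u k + y k"
  have "y k \<in> ball_ent E x" unfolding ball_ent_def E_def A_def x_def by auto
  moreover have "x \<in> ball_ent E x" unfolding ball_ent_def E_def A_def by force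
  ultimately have "\<bar>f x - f (y k)\<bar> \<le> C" using C by blast
  then show False using uy[of k] k unfolding x_def by linarith
qed

theorem theorem10:
  fixes X :: "'a::group_add topology"
  assumes "topological_group X"
    and "metrizable_space X"
    and "Hausdorff_space X"
    and "group_totally_bounded X"
  shows "mu_bounded (ideal_coarse_structure (S_tau X))"
  unfolding mu_bounded_def
proof (intro allI impI)
  fix f :: "'a \<Rightarrow> real"
  assume mu: "macro_uniform (ideal_coarse_structure (S_tau X)) f"
  obtain U n where Uo: "openin X U" and U0: "0 \<in> U"
    and Ub: "\<And>u y. u \<in> U \<Longrightarrow> \<bar>f (u + y) - f y\<bar> \<le> real n"
    using local_bound[OF assms(1,2) mu] by blast
  have top: "topspace X = UNIV" using assms(1) unfolding topological_group_def by blast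
  have cm: "continuous_map X X uminus" using assms(1) unfolding topological_group_def by blast
  have "openin X {x \<in> topspace X. - x \<in> U}"
    using cm Uo by (rule openin_continuous_map_preimage)
  moreover have "{x \<in> topspace X. - x \<in> U} = uminus ` U"
    using top by (auto simp: image_iff) (metis minus_minus)
  ultimately have Wo: "openin X (uminus ` U)" by simp
  have "0 \<in> uminus ` U" using U0 by force
  then obtain F where fF: "finite F" and cov: "(\<Union>x\<in>F. (\<lambda>v. x + v) ` (uminus ` U)) = UNIV"
  proof -
    have "\<forall>U. openin X U \<and> 0 \<in> U \<longrightarrow> (\<exists>F. finite F \<and> (\<Union>x\<in>F. (\<lambda>u. x + u) ` U) = UNIV)"
      using assms(4) unfolding group_totally_bounded_def .
    then have "\<exists>F. finite F \<and> (\<Union>x\<in>F. (\<lambda>u. x + u) ` (uminus ` U)) = UNIV"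
      using Wo \<open>0 \<in> uminus ` U\<close> by presburger
    then show ?thesis using that by blast
  qed
  define M where "M = (\<Sum>c\<in>F. \<bar>f (- c)\<bar>)"
  have "\<bar>f g\<bar> \<le> M + real n" for g
  proof -
    have "- g \<in> (\<Union>x\<in>F. (\<lambda>v. x + v) ` (uminus ` U))" using cov by simp
    then obtain c u where c: "c \<in> F" "u \<in> U" "- g = c + - u" by blast
    then have "g = u + - c" by (metis minus_add minus_minus)
    then have "\<bar>f g - f (- c)\<bar> \<le> real n" using Ub[OF c(2), of "- c"] by simp
    moreover have "\<bar>f (- c)\<bar> \<le> M" unfolding M_def
      using fF c(1) by (intro member_le_sum) auto
    ultimately show ?thesis by linarith
  qed
  then show "bounded (range f)" unfolding bounded_iff by auto
qed

end
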